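(* Let $\Omega\subset\mathbb R^3$ be a bounded domain and $D\subset\partial\Omega$ closed. Suppose $U\subset\mathbb R^3$ is open with $U\subset\Omega\cup D$ and that $\Omega\cap U$ splits up into the connected components $\Omega_1,\dots,\Omega_m$. Let $q\in[1,\infty[$. Then for any $f\in W^{1,q}_D(\Omega)$ and $\eta\in C^\infty_0(U)$, the function $\eta f|_{\Omega_j}$ belongs to $W^{1,q}_0(\Omega_j)$ for every $j$.
   Context: For an open set $\Lambda\subset\mathbb R^d$ and a closed set $E\subset\partial\Lambda$, $C^\infty_E(\Lambda)=\{v|_\Lambda: v\in C^\infty_0(\mathbb R^d),\ \operatorname{supp}v\cap E=\emptyset\}$, $W^{1,q}_E(\Lambda)$ is the closure of $C^\infty_E(\Lambda)$ in $W^{1,q}(\Lambda)$, and $W^{1,q}_0(\Lambda)=W^{1,q}_{\partial\Lambda}(\Lambda)$. *)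

theory Defs
  imports "HOL-Analysis.Analysis"
begin

definition csupp :: "('a::topological_space \<Rightarrow> real) \<Rightarrow> 'a set" where
  "csupp v = closure {x. v x \<noteq> 0}"

definition pderiv :: "('a::euclidean_space \<Rightarrow> real) \<Rightarrow> 'a \<Rightarrow> 'a \<Rightarrow> real" where
  "pderiv g i = (\<lambda>x. frechet_derivative g (at x) i)"

text \<open>C-infinity on the whole space: contained in a family of everywhere (Frechet)
  differentiable functions that is closed under taking partial derivatives.\<close>
definition smooth :: "('a::euclidean_space \<Rightarrow> real) \<Rightarrow> bool" where
  "smooth f \<longleftrightarrow> (\<exists>S. f \<in> S \<and>
      (\<forall>g\<in>S. g differentiable_on UNIV \<and> (\<forall>i\<in>Basis. pderiv g i \<in> S)))"

definition Cinf_c :: "'a::euclidean_space set \<Rightarrow> ('a \<Rightarrow> real) set" where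
  "Cinf_c \<Lambda> = {\<phi>. smooth \<phi> \<and> compact (csupp \<phi>) \<and> csupp \<phi> \<subseteq> \<Lambda>}"

definition Lq :: "real \<Rightarrow> 'a::euclidean_space set \<Rightarrow> ('a \<Rightarrow> real) \<Rightarrow> bool" where
  "Lq q \<Lambda> f \<longleftrightarrow> set_borel_measurable lebesgue \<Lambda> f \<and>
      (\<integral>\<^sup>+ x\<in>\<Lambda>. ennreal (\<bar>f x\<bar> powr q) \<partial>lebesgue) < \<infinity>"

definition weak_pderiv :: "'a::euclidean_space set \<Rightarrow> ('a \<Rightarrow> real) \<Rightarrow> 'a \<Rightarrow> ('a \<Rightarrow> real) \<Rightarrow> bool" where
  "weak_pderiv \<Lambda> f i g \<longleftrightarrow> (\<forall>\<phi>\<in>Cinf_c \<Lambda>.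
      (LINT x:\<Lambda>|lebesgue. f x * pderiv \<phi> i x) = - (LINT x:\<Lambda>|lebesgue. g x * \<phi> x))"

definition W1q_grad :: "real \<Rightarrow> 'a::euclidean_space set \<Rightarrow> ('a \<Rightarrow> real) \<Rightarrow> ('a \<Rightarrow> 'a \<Rightarrow> real) \<Rightarrow> bool" where
  "W1q_grad q \<Lambda> f g \<longleftrightarrow> Lq q \<Lambda> f \<and> (\<forall>i\<in>Basis. weak_pderiv \<Lambda> f i (g i) \<and> Lq q \<Lambda> (g i))"

text \<open>W^{1,q}_E(Lambda): closure in the W^{1,q}(Lambda)-norm of restrictions of C-infinity
  compactly supported functions on the whole space whose support avoids E.
  (Distance measured by the q-th power of the W^{1,q} norm.)\<close>
definition W1qE :: "real \<Rightarrow> 'a::euclidean_space set \<Rightarrow> 'a set \<Rightarrow> ('a \<Rightarrow> real) \<Rightarrow> bool" where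
  "W1qE q \<Lambda> E f \<longleftrightarrow> (\<exists>g. W1q_grad q \<Lambda> f g \<and>
      (\<forall>\<epsilon>>0. \<exists>v. smooth v \<and> compact (csupp v) \<and> csupp v \<inter> E = {} \<and>
         (\<integral>\<^sup>+ x\<in>\<Lambda>. ennreal (\<bar>f x - v x\<bar> powr q
              + (\<Sum>i\<in>Basis. \<bar>g i x - pderiv v i x\<bar> powr q)) \<partial>lebesgue) < ennreal \<epsilon>))"

definition W1q0 :: "real \<Rightarrow> 'a::euclidean_space set \<Rightarrow> ('a \<Rightarrow> real) \<Rightarrow> bool" where
  "W1q0 q \<Lambda> f \<longleftrightarrow> W1qE q \<Lambda> (frontier \<Lambda>) f"

end

theory Submission
  imports Defs
begin


lemma pderiv_mult:
  assumes "a differentiable (at x)" "b differentiable (at x)"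
  shows "pderiv (\<lambda>x. a x * b x) i x = pderiv a i x * b x + a x * pderiv b i x"
proof -
  have "((\<lambda>x. a x * b x) has_derivative
     (\<lambda>h. a x * frechet_derivative b (at x) h + frechet_derivative a (at x) h * b x)) (at x)"
    by (rule has_derivative_mult) (use assms frechet_derivative_works in blast)+
  from frechet_derivative_at[OF this] show ?thesis
    unfolding pderiv_def by (metis add.commute mult.commute)
qed

lemma pderiv_add:
  assumes "a differentiable (at x)" "b differentiable (at x)"
  shows "pderiv (\<lambda>x. a x + b x) i x = pderiv a i x + pderiv b i x"
proof -
  have "((\<lambda>x. a x + b x) has_derivative
     (\<lambda>h. frechet_derivative a (at x) h + frechet_derivative b (at x) h)) (at x)"
    by (rule has_derivative_add) (use assms frechet_derivative_works in blast)+
  from frechet_derivative_at[OF this] show ?thesis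
    unfolding pderiv_def by metis
qed

inductive_set prodsum :: "('a \<Rightarrow> real) set \<Rightarrow> ('a \<Rightarrow> real) set \<Rightarrow> ('a \<Rightarrow> real) set"
  for A B where
  ps_mult: "a \<in> A \<Longrightarrow> b \<in> B \<Longrightarrow> (\<lambda>x. a x * b x) \<in> prodsum A B"
| ps_add: "h1 \<in> prodsum A B \<Longrightarrow> h2 \<in> prodsum A B \<Longrightarrow> (\<lambda>x. h1 x + h2 x) \<in> prodsum A B"

lemma prodsum_closed:
  fixes A B :: "('a::euclidean_space \<Rightarrow> real) set"
  assumes A: "\<forall>g\<in>A. g differentiable_on UNIV \<and> (\<forall>i\<in>Basis. pderiv g i \<in> A)"
    and B: "\<forall>g\<in>B. g differentiable_on UNIV \<and> (\<forall>i\<in>Basis. pderiv g i \<in> B)"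
    and h: "h \<in> prodsum A B"
  shows "h differentiable_on UNIV \<and> (\<forall>i\<in>Basis. pderiv h i \<in> prodsum A B)"
  using h
proof induction
  case (ps_mult a b)
  have da: "\<And>x. a differentiable (at x)" and db: "\<And>x. b differentiable (at x)"
    using A B ps_mult by (auto simp: differentiable_on_def)
  have "(\<lambda>x. a x * b x) differentiable_on UNIV"
    using da db by (auto simp: differentiable_on_def intro!: differentiable_mult)
  moreover have "pderiv (\<lambda>x. a x * b x) i \<in> prodsum A B" if i: "i \<in> Basis" for i
  proof -
    have "pderiv (\<lambda>x. a x * b x) i = (\<lambda>x. pderiv a i x * b x + a x * pderiv b i x)"
      using pderiv_mult[OF da db] by blast
    moreover have "(\<lambda>x. pderiv a i x * b x + a x * pderiv b i x) \<in> prodsum A B"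
      using A B ps_mult i by (intro prodsum.ps_add prodsum.ps_mult) auto
    ultimately show ?thesis by simp
  qed
  ultimately show ?case by blast
next
  case (ps_add h1 h2)
  have d1: "\<And>x. h1 differentiable (at x)" and d2: "\<And>x. h2 differentiable (at x)"
    using ps_add by (auto simp: differentiable_on_def)
  have "(\<lambda>x. h1 x + h2 x) differentiable_on UNIV"
    using d1 d2 by (auto simp: differentiable_on_def intro!: differentiable_add)
  moreover have "pderiv (\<lambda>x. h1 x + h2 x) i \<in> prodsum A B" if i: "i \<in> Basis" for i
  proof -
    have "pderiv (\<lambda>x. h1 x + h2 x) i = (\<lambda>x. pderiv h1 i x + pderiv h2 i x)"
      using pderiv_add[OF d1 d2] by blast
    moreover have "(\<lambda>x. pderiv h1 i x + pderiv h2 i x) \<in> prodsum A B"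
      using ps_add i by (intro prodsum.ps_add) auto
    ultimately show ?thesis by simp
  qed
  ultimately show ?case by blast
qed

lemma smooth_mult:
  fixes a b :: "'a::euclidean_space \<Rightarrow> real"
  assumes "smooth a" "smooth b"
  shows "smooth (\<lambda>x. a x * b x)"
proof -
  obtain A where A: "a \<in> A" "\<forall>g\<in>A. g differentiable_on UNIV \<and> (\<forall>i\<in>Basis. pderiv g i \<in> A)"
    using assms(1) unfolding smooth_def by blast
  obtain B where B: "b \<in> B" "\<forall>g\<in>B. g differentiable_on UNIV \<and> (\<forall>i\<in>Basis. pderiv g i \<in> B)"
    using assms(2) unfolding smooth_def by blast
  show ?thesis unfolding smooth_def
    using prodsum_closed[OF A(2) B(2)] prodsum.ps_mult[OF A(1) B(1)] by blast
qed

lemma smooth_diff: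
  assumes "smooth a" shows "a differentiable_on UNIV" "\<And>i. i \<in> Basis \<Longrightarrow> smooth (pderiv a i)"
proof -
  obtain S where S: "a \<in> S" "\<forall>g\<in>S. g differentiable_on UNIV \<and> (\<forall>i\<in>Basis. pderiv g i \<in> S)"
    using assms unfolding smooth_def by blast
  show "a differentiable_on UNIV" using S by blast
  show "smooth (pderiv a i)" if "i \<in> Basis" for i
    unfolding smooth_def using S that by blast
qed

lemma smooth_cont: "smooth a \<Longrightarrow> continuous_on UNIV a"
  by (rule differentiable_imp_continuous_on[OF smooth_diff(1)])

lemma smooth_at: "smooth a \<Longrightarrow> a differentiable (at x)"
  using smooth_diff(1)[of a] unfolding differentiable_on_def by blast

lemma csupp_mult: "csupp (\<lambda>x. a x * b x) \<subseteq> csupp a \<inter> csupp b"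
  unfolding csupp_def by (intro Int_greatest closure_mono) auto

lemma closed_csupp: "closed (csupp a)"
  unfolding csupp_def by simp

lemma not_csupp: "x \<notin> csupp a \<Longrightarrow> a x = 0"
proof (rule ccontr)
  assume "x \<notin> csupp a" "a x \<noteq> 0"
  then have "x \<in> {x. a x \<noteq> 0}" by simp
  then have "x \<in> csupp a" unfolding csupp_def by (rule closure_subset[THEN subsetD])
  with \<open>x \<notin> csupp a\<close> show False by simp
qed

lemma pderiv_not_csupp:
  fixes a :: "'a::euclidean_space \<Rightarrow> real"
  assumes "x \<notin> csupp a" shows "pderiv a i x = 0"
proof -
  have "((\<lambda>y. 0) has_derivative (\<lambda>h. 0)) (at x)" by simp
  moreover have "open (- csupp a)" using closed_csupp[of a] by (simp add: open_Compl)
  moreover have "\<And>y. y \<in> - csupp a \<Longrightarrow> 0 = a y" using not_csupp by force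
  ultimately have "(a has_derivative (\<lambda>h. 0)) (at x)"
    using assms has_derivative_transform_within_open[of "\<lambda>y. 0" "\<lambda>h. 0" x UNIV "- csupp a" a]
    by simp
  from frechet_derivative_at[OF this] show ?thesis unfolding pderiv_def by metis
qed



lemma bounded_cont:
  fixes h :: "'a::euclidean_space \<Rightarrow> real"
  assumes "continuous_on UNIV h" "bounded S"
  shows "\<exists>M. \<forall>x\<in>S. \<bar>h x\<bar> \<le> M"
proof -
  have "compact (h ` closure S)"
    using assms by (intro compact_continuous_image continuous_on_subset[OF assms(1)])
       (auto simp: compact_closure)
  then obtain M where "\<forall>y\<in>h ` closure S. norm y \<le> M"
    using compact_imp_bounded bounded_iff by metis
  then show ?thesis using closure_subset by fastforce
qed

lemma powr_add_le:
  fixes a b q :: real assumes "0 < q"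
  shows "\<bar>a + b\<bar> powr q \<le> 2 powr q * (\<bar>a\<bar> powr q + \<bar>b\<bar> powr q)"
proof -
  have "\<bar>a + b\<bar> powr q \<le> (2 * max \<bar>a\<bar> \<bar>b\<bar>) powr q"
    using assms by (intro powr_mono2) auto
  also have "\<dots> = 2 powr q * max \<bar>a\<bar> \<bar>b\<bar> powr q"
    by (simp add: powr_mult)
  also have "max \<bar>a\<bar> \<bar>b\<bar> powr q \<le> \<bar>a\<bar> powr q + \<bar>b\<bar> powr q"
    by (cases "\<bar>a\<bar> \<le> \<bar>b\<bar>") (auto simp: max_def)
  then have "2 powr q * max \<bar>a\<bar> \<bar>b\<bar> powr q \<le> 2 powr q * (\<bar>a\<bar> powr q + \<bar>b\<bar> powr q)"
    by (intro mult_left_mono) auto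
  finally show ?thesis .
qed

lemma open_bounded_sets: "open S \<Longrightarrow> bounded S \<Longrightarrow> S \<in> sets lebesgue"
  using lmeasurable_open fmeasurableD by blast

lemma cont_meas:
  fixes h :: "'a::euclidean_space \<Rightarrow> real"
  shows "continuous_on UNIV h \<Longrightarrow> h \<in> borel_measurable lebesgue"
  using continuous_imp_measurable_on_sets_lebesgue[of UNIV h] lebesgue_on_UNIV_eq by auto

lemma meas_ind:
  fixes f :: "'a::euclidean_space \<Rightarrow> real"
  assumes "set_borel_measurable lebesgue S f" "0 < q"
  shows "(\<lambda>x. ennreal (\<bar>f x\<bar> powr q) * indicator S x) \<in> borel_measurable lebesgue"
proof -
  have m: "(\<lambda>x. indicator S x *\<^sub>R f x) \<in> borel_measurable lebesgue"
    using assms unfolding set_borel_measurable_def by simp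
  have eq: "(\<lambda>x. ennreal (\<bar>indicator S x *\<^sub>R f x\<bar> powr q)) =
      (\<lambda>x. ennreal (\<bar>f x\<bar> powr q) * indicator S x)"
    by (intro ext) (auto simp: indicator_def)
  show ?thesis unfolding eq[symmetric] using m by measurable
qed

lemma Lq_mult_bounded:
  fixes f h :: "'a::euclidean_space \<Rightarrow> real"
  assumes L: "Lq q S f" and q: "0 < q" and T: "T \<subseteq> S" "T \<in> sets lebesgue"
    and h: "h \<in> borel_measurable lebesgue" and M: "\<forall>x\<in>T. \<bar>h x\<bar> \<le> M"
  shows "Lq q T (\<lambda>x. h x * f x)"
proof -
  have m: "(\<lambda>x. indicator S x *\<^sub>R f x) \<in> borel_measurable lebesgue"
    and fin: "(\<integral>\<^sup>+ x\<in>S. ennreal (\<bar>f x\<bar> powr q) \<partial>lebesgue) < \<infinity>"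
    using L unfolding Lq_def set_borel_measurable_def by auto
  have "(\<lambda>x. indicator T x *\<^sub>R (h x * f x)) = (\<lambda>x. h x * indicator T x * (indicator S x *\<^sub>R f x))"
    using T by (intro ext) (auto simp: indicator_def)
  moreover have "(\<lambda>x. h x * indicator T x * (indicator S x *\<^sub>R f x)) \<in> borel_measurable lebesgue"
    using m h T by measurable
  ultimately have meas: "set_borel_measurable lebesgue T (\<lambda>x. h x * f x)"
    unfolding set_borel_measurable_def by simp
  have "(\<integral>\<^sup>+ x\<in>T. ennreal (\<bar>h x * f x\<bar> powr q) \<partial>lebesgue) \<le>
        (\<integral>\<^sup>+ x. ennreal (\<bar>M\<bar> powr q) * (ennreal (\<bar>f x\<bar> powr q) * indicator S x) \<partial>lebesgue)"
  proof (rule nn_integral_mono)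
    fix x
    show "ennreal (\<bar>h x * f x\<bar> powr q) * indicator T x \<le>
          ennreal (\<bar>M\<bar> powr q) * (ennreal (\<bar>f x\<bar> powr q) * indicator S x)"
    proof (cases "x \<in> T")
      case True
      have hM: "\<bar>h x\<bar> \<le> \<bar>M\<bar>" using M True by force
      have "\<bar>h x * f x\<bar> powr q = \<bar>h x\<bar> powr q * \<bar>f x\<bar> powr q"
        by (simp add: abs_mult powr_mult)
      also have "\<dots> \<le> \<bar>M\<bar> powr q * \<bar>f x\<bar> powr q"
        by (rule mult_right_mono[OF powr_mono2]) (use q hM in auto)
      finally have "ennreal (\<bar>h x * f x\<bar> powr q) \<le> ennreal (\<bar>M\<bar> powr q) * ennreal (\<bar>f x\<bar> powr q)"
        by (simp add: ennreal_mult'[symmetric])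
      then show ?thesis using True T by auto
    qed simp
  qed
  also have "\<dots> = ennreal (\<bar>M\<bar> powr q) * (\<integral>\<^sup>+ x\<in>S. ennreal (\<bar>f x\<bar> powr q) \<partial>lebesgue)"
    by (rule nn_integral_cmult) (rule meas_ind[OF _ q], use L Lq_def in blast)
  also have "\<dots> < \<infinity>" using fin by (simp add: ennreal_mult_less_top)
  finally show ?thesis using meas unfolding Lq_def by blast
qed



lemma Lq_meas: "Lq q S f \<Longrightarrow> (\<lambda>x. indicator S x *\<^sub>R f x) \<in> borel_measurable lebesgue"
  unfolding Lq_def set_borel_measurable_def by simp

lemma Lq_add:
  fixes a b :: "'a::euclidean_space \<Rightarrow> real"
  assumes La: "Lq q T a" and Lb: "Lq q T b" and q: "0 < q"
  shows "Lq q T (\<lambda>x. a x + b x)"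
proof -
  have "(\<lambda>x. indicator T x *\<^sub>R (a x + b x)) = (\<lambda>x. indicator T x *\<^sub>R a x + indicator T x *\<^sub>R b x)"
    by (intro ext) (simp add: distrib_left)
  moreover have "(\<lambda>x. indicator T x *\<^sub>R a x + indicator T x *\<^sub>R b x) \<in> borel_measurable lebesgue"
    using Lq_meas[OF La] Lq_meas[OF Lb] by (rule borel_measurable_add)
  ultimately have meas: "set_borel_measurable lebesgue T (\<lambda>x. a x + b x)"
    unfolding set_borel_measurable_def by simp
  have ma: "(\<lambda>x. ennreal (\<bar>a x\<bar> powr q) * indicator T x) \<in> borel_measurable lebesgue"
    by (rule meas_ind[OF _ q]) (use La Lq_def in blast)
  have mb: "(\<lambda>x. ennreal (\<bar>b x\<bar> powr q) * indicator T x) \<in> borel_measurable lebesgue"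
    by (rule meas_ind[OF _ q]) (use Lb Lq_def in blast)
  have "(\<integral>\<^sup>+ x\<in>T. ennreal (\<bar>a x + b x\<bar> powr q) \<partial>lebesgue) \<le>
        (\<integral>\<^sup>+ x. ennreal (2 powr q) * (ennreal (\<bar>a x\<bar> powr q) * indicator T x + ennreal (\<bar>b x\<bar> powr q) * indicator T x) \<partial>lebesgue)"
  proof (rule nn_integral_mono)
    fix x
    have "\<bar>a x + b x\<bar> powr q \<le> 2 powr q * (\<bar>a x\<bar> powr q + \<bar>b x\<bar> powr q)"
      by (rule powr_add_le[OF q])
    then have "ennreal (\<bar>a x + b x\<bar> powr q) \<le> ennreal (2 powr q) * (ennreal (\<bar>a x\<bar> powr q) + ennreal (\<bar>b x\<bar> powr q))"
      by (simp add: ennreal_mult'[symmetric] ennreal_plus[symmetric] del: ennreal_plus)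
    then show "ennreal (\<bar>a x + b x\<bar> powr q) * indicator T x \<le>
        ennreal (2 powr q) * (ennreal (\<bar>a x\<bar> powr q) * indicator T x + ennreal (\<bar>b x\<bar> powr q) * indicator T x)"
      by (cases "x \<in> T") auto
  qed
  also have "\<dots> = ennreal (2 powr q) * ((\<integral>\<^sup>+ x\<in>T. ennreal (\<bar>a x\<bar> powr q) \<partial>lebesgue) + (\<integral>\<^sup>+ x\<in>T. ennreal (\<bar>b x\<bar> powr q) \<partial>lebesgue))"
    using ma mb by (simp add: nn_integral_cmult nn_integral_add)
  also have "\<dots> < \<infinity>"
    using La Lb unfolding Lq_def by (simp add: ennreal_mult_less_top)
  finally show ?thesis using meas unfolding Lq_def by blast
qed

lemma Lq_integrable:
  fixes f :: "'a::euclidean_space \<Rightarrow> real"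
  assumes L: "Lq q S f" and q: "1 \<le> q" and S: "S \<in> sets lebesgue" "emeasure lebesgue S < \<infinity>"
  shows "set_integrable lebesgue S f"
  unfolding set_integrable_def
proof (rule integrableI_bounded)
  show "(\<lambda>x. indicator S x *\<^sub>R f x) \<in> borel_measurable lebesgue" using Lq_meas[OF L] .
  have mf: "(\<lambda>x. ennreal (\<bar>f x\<bar> powr q) * indicator S x) \<in> borel_measurable lebesgue"
    by (rule meas_ind) (use L Lq_def q in auto)
  have "(\<integral>\<^sup>+ x. ennreal (norm (indicator S x *\<^sub>R f x)) \<partial>lebesgue) \<le>
        (\<integral>\<^sup>+ x. indicator S x + ennreal (\<bar>f x\<bar> powr q) * indicator S x \<partial>lebesgue)"
  proof (rule nn_integral_mono)
    fix x
    have "\<bar>f x\<bar> \<le> 1 + \<bar>f x\<bar> powr q"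
    proof (cases "\<bar>f x\<bar> \<le> 1")
      case False
      then have "\<bar>f x\<bar> powr 1 \<le> \<bar>f x\<bar> powr q" using q by (intro powr_mono) auto
      then show ?thesis using False by simp
    next
      case True
      have "0 \<le> \<bar>f x\<bar> powr q" by simp
      then show ?thesis using True by linarith
    qed
    then have "ennreal \<bar>f x\<bar> \<le> 1 + ennreal (\<bar>f x\<bar> powr q)"
      by (metis ennreal_1 ennreal_leI ennreal_plus powr_ge_zero zero_le_one)
    then show "ennreal (norm (indicator S x *\<^sub>R f x)) \<le> indicator S x + ennreal (\<bar>f x\<bar> powr q) * indicator S x"
      by (cases "x \<in> S") auto
  qed
  also have "\<dots> = emeasure lebesgue S + (\<integral>\<^sup>+ x\<in>S. ennreal (\<bar>f x\<bar> powr q) \<partial>lebesgue)"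
    using S mf by (subst nn_integral_add) auto
  also have "\<dots> < \<infinity>" using S L unfolding Lq_def by simp
  finally show "(\<integral>\<^sup>+ x. ennreal (norm (indicator S x *\<^sub>R f x)) \<partial>lebesgue) < \<infinity>" .
qed

lemma set_integrable_mult_bounded:
  fixes f h :: "'a::euclidean_space \<Rightarrow> real"
  assumes I: "set_integrable lebesgue S f" and h: "h \<in> borel_measurable lebesgue"
    and M: "\<forall>x\<in>S. \<bar>h x\<bar> \<le> M"
  shows "set_integrable lebesgue S (\<lambda>x. f x * h x)"
proof -
  have i: "integrable lebesgue (\<lambda>x. M *\<^sub>R (indicator S x *\<^sub>R f x))"
    using I unfolding set_integrable_def by (rule integrable_scaleR_right)
  have "(\<lambda>x. indicator S x *\<^sub>R f x) \<in> borel_measurable lebesgue"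
    using I unfolding set_integrable_def by (rule borel_measurable_integrable)
  then have "(\<lambda>x. (indicator S x *\<^sub>R f x) * h x) \<in> borel_measurable lebesgue"
    using h by (rule borel_measurable_times)
  then have m: "(\<lambda>x. indicator S x *\<^sub>R (f x * h x)) \<in> borel_measurable lebesgue"
    by (simp add: mult.assoc)
  have ae: "AE x in lebesgue. norm (indicator S x *\<^sub>R (f x * h x)) \<le> norm (M *\<^sub>R (indicator S x *\<^sub>R f x))"
  proof (rule AE_I2)
    fix x
    show "norm (indicator S x *\<^sub>R (f x * h x)) \<le> norm (M *\<^sub>R (indicator S x *\<^sub>R f x))"
    proof (cases "x \<in> S")
      case True
      then have "\<bar>h x\<bar> \<le> \<bar>M\<bar>" using M by force
      then have "\<bar>f x\<bar> * \<bar>h x\<bar> \<le> \<bar>f x\<bar> * \<bar>M\<bar>" by (rule mult_left_mono) simp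
      then show ?thesis using True by (simp add: abs_mult mult.commute)
    qed simp
  qed
  show ?thesis unfolding set_integrable_def
    by (rule Bochner_Integration.integrable_bound[OF i m ae])
qed

lemma set_integral_restrict:
  assumes "T \<subseteq> S" "\<forall>x\<in>S - T. h x = 0"
  shows "(LINT x:S|M. h x) = (LINT x:T|M. (h x :: real))"
  unfolding set_lebesgue_integral_def
proof (rule arg_cong[where f="integral\<^sup>L M"], rule ext)
  fix x show "indicator S x *\<^sub>R h x = indicator T x *\<^sub>R h x"
    using assms by (cases "x \<in> T"; cases "x \<in> S") auto
qed

lemma frontier_component:
  fixes S :: "'a::real_normed_vector set"
  assumes "open S" "C \<in> components S" shows "frontier C \<inter> S = {}"
proof -
  have "frontier C \<subseteq> frontier S" using frontier_of_components_subset assms(2) .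
  moreover have "frontier S \<inter> S = {}" using assms(1) by (metis Diff_disjoint frontier_def interior_open inf_commute)
  ultimately show ?thesis by auto
qed



lemma pt_bound:
  fixes n e A B q :: real and u d :: "'i \<Rightarrow> real" and I :: "'i set"
  assumes q: "0 < q" and nA: "\<bar>n\<bar> \<le> A" and dB: "\<forall>i\<in>I. \<bar>d i\<bar> \<le> B"
  shows "\<bar>n * e\<bar> powr q + (\<Sum>i\<in>I. \<bar>n * u i + d i * e\<bar> powr q)
    \<le> (2 powr q * (A powr q + real (card I) * B powr q) + 1) * (\<bar>e\<bar> powr q + (\<Sum>i\<in>I. \<bar>u i\<bar> powr q))"
proof -
  define P where "P = \<bar>e\<bar> powr q"
  define Q where "Q = (\<Sum>i\<in>I. \<bar>u i\<bar> powr q)"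
  define a where "a = A powr q"
  define b where "b = B powr q"
  define c where "c = (2::real) powr q"
  define N where "N = real (card I)"
  have P0: "0 \<le> P" and Q0: "0 \<le> Q" and a0: "0 \<le> a" and b0: "0 \<le> b" and N0: "0 \<le> N"
    by (auto simp: P_def Q_def a_def b_def N_def intro: sum_nonneg)
  have c1: "1 \<le> c" unfolding c_def using q by (simp add: ge_one_powr_ge_zero)
  have t1: "\<bar>n * e\<bar> powr q \<le> a * P"
  proof -
    have "\<bar>n * e\<bar> powr q = \<bar>n\<bar> powr q * \<bar>e\<bar> powr q" by (simp add: abs_mult powr_mult)
    also have "\<dots> \<le> a * P" unfolding a_def P_def
      by (rule mult_right_mono[OF powr_mono2]) (use q nA in auto)
    finally show ?thesis .
  qed
  have t2: "\<bar>n * u i + d i * e\<bar> powr q \<le> c * a * \<bar>u i\<bar> powr q + c * b * P" if i: "i \<in> I" for i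
  proof -
    have st: "\<bar>n * u i + d i * e\<bar> powr q \<le> c * (\<bar>n * u i\<bar> powr q + \<bar>d i * e\<bar> powr q)"
      unfolding c_def by (rule powr_add_le[OF q])
    have "\<bar>n * u i\<bar> powr q \<le> a * \<bar>u i\<bar> powr q"
    proof -
      have "\<bar>n * u i\<bar> powr q = \<bar>n\<bar> powr q * \<bar>u i\<bar> powr q" by (simp add: abs_mult powr_mult)
      also have "\<dots> \<le> a * \<bar>u i\<bar> powr q" unfolding a_def
        by (rule mult_right_mono[OF powr_mono2]) (use q nA in auto)
      finally show ?thesis .
    qed
    moreover have "\<bar>d i * e\<bar> powr q \<le> b * P"
    proof -
      have "\<bar>d i * e\<bar> powr q = \<bar>d i\<bar> powr q * \<bar>e\<bar> powr q" by (simp add: abs_mult powr_mult)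
      also have "\<dots> \<le> b * P" unfolding b_def P_def
        by (rule mult_right_mono[OF powr_mono2]) (use q dB i in auto)
      finally show ?thesis .
    qed
    ultimately have "c * (\<bar>n * u i\<bar> powr q + \<bar>d i * e\<bar> powr q) \<le> c * (a * \<bar>u i\<bar> powr q + b * P)"
      using c1 by (intro mult_left_mono) auto
    with st show ?thesis by (simp add: algebra_simps)
  qed
  have "(\<Sum>i\<in>I. \<bar>n * u i + d i * e\<bar> powr q) \<le> (\<Sum>i\<in>I. c * a * \<bar>u i\<bar> powr q + c * b * P)"
    using t2 by (rule sum_mono)
  also have "\<dots> = c * a * Q + N * (c * b * P)"
    by (simp add: sum.distrib sum_distrib_left Q_def N_def)
  finally have s: "(\<Sum>i\<in>I. \<bar>n * u i + d i * e\<bar> powr q) \<le> c * a * Q + N * (c * b * P)" .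
  have "1 * (a * P) \<le> c * (a * P)" using c1 a0 P0 by (intro mult_right_mono) auto
  then have aP: "a * P \<le> c * a * P" by (simp add: mult.assoc)
  have "(c * (a + N * b) + 1) * (P + Q) = c * a * P + N * (c * b * P) + P + c * a * Q + c * N * b * Q + Q"
    by (simp add: algebra_simps)
  moreover have "0 \<le> c * N * b * Q" using c1 N0 b0 Q0 by simp
  ultimately have "a * P + (c * a * Q + N * (c * b * P)) \<le> (c * (a + N * b) + 1) * (P + Q)"
    using aP P0 Q0 by linarith
  with t1 s show ?thesis unfolding P_def Q_def a_def b_def c_def N_def by linarith
qed



lemma approx_part:
  fixes \<Omega> D U \<Omega>j :: "'a::euclidean_space set" and q :: real and f \<eta> :: "'a \<Rightarrow> real"
    and g :: "'a \<Rightarrow> 'a \<Rightarrow> real"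
  assumes jsubO: "\<Omega>j \<subseteq> \<Omega>" and Osets: "\<Omega> \<in> sets lebesgue" and q0: "0 < q"
    and \<eta>s: "smooth \<eta>" and \<eta>cpt: "compact (csupp \<eta>)" and \<eta>U: "csupp \<eta> \<subseteq> U"
    and UD: "U \<subseteq> \<Omega> \<union> D" and OU: "open (\<Omega> \<inter> U)" and comp: "\<Omega>j \<in> components (\<Omega> \<inter> U)"
    and M1: "\<forall>x\<in>\<Omega>. \<bar>\<eta> x\<bar> \<le> M1" and M2: "\<And>x i. x \<in> \<Omega> \<Longrightarrow> i \<in> Basis \<Longrightarrow> \<bar>pderiv \<eta> i x\<bar> \<le> M2"
    and Lf: "Lq q \<Omega> f" and Lg: "\<And>i. i \<in> Basis \<Longrightarrow> Lq q \<Omega> (g i)"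
    and approx: "\<forall>\<epsilon>>0. \<exists>v. smooth v \<and> compact (csupp v) \<and> csupp v \<inter> D = {} \<and>
         (\<integral>\<^sup>+ x\<in>\<Omega>. ennreal (\<bar>f x - v x\<bar> powr q
              + (\<Sum>i\<in>Basis. \<bar>g i x - pderiv v i x\<bar> powr q)) \<partial>lebesgue) < ennreal \<epsilon>"
    and \<epsilon>: "0 < \<epsilon>"
  shows "\<exists>w. smooth w \<and> compact (csupp w) \<and> csupp w \<inter> frontier \<Omega>j = {} \<and>
         (\<integral>\<^sup>+ x\<in>\<Omega>j. ennreal (\<bar>\<eta> x * f x - w x\<bar> powr q
              + (\<Sum>i\<in>Basis. \<bar>(\<eta> x * g i x + pderiv \<eta> i x * f x) - pderiv w i x\<bar> powr q)) \<partial>lebesgue) < ennreal \<epsilon>"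
proof -
  define K where "K = 2 powr q * (M1 powr q + real (card (Basis::'a set)) * M2 powr q) + 1"
  have K0: "0 < K" unfolding K_def by (simp add: add_nonneg_pos)
  obtain v where vs: "smooth v" and vcpt: "compact (csupp v)" and vD: "csupp v \<inter> D = {}"
    and vI: "(\<integral>\<^sup>+ x\<in>\<Omega>. ennreal (\<bar>f x - v x\<bar> powr q
              + (\<Sum>i\<in>Basis. \<bar>g i x - pderiv v i x\<bar> powr q)) \<partial>lebesgue) < ennreal (\<epsilon> / K)"
    using approx \<epsilon> K0 by (meson divide_pos_pos)
  define w where "w = (\<lambda>x. \<eta> x * v x)"
  have ws: "smooth w" unfolding w_def using smooth_mult[OF \<eta>s vs] .
  have wsub: "csupp w \<subseteq> csupp \<eta> \<inter> csupp v" unfolding w_def by (rule csupp_mult)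
  have "compact (csupp \<eta> \<inter> csupp w)" using compact_Int_closed[OF \<eta>cpt closed_csupp] .
  moreover have "csupp \<eta> \<inter> csupp w = csupp w" using wsub by blast
  ultimately have wcpt: "compact (csupp w)" by simp
  have "csupp w \<subseteq> \<Omega> \<inter> U" using wsub \<eta>U UD vD by blast
  then have wfr: "csupp w \<inter> frontier \<Omega>j = {}" using frontier_component[OF OU comp] by blast
  define E where "E = (\<lambda>x. \<bar>f x - v x\<bar> powr q + (\<Sum>i\<in>Basis. \<bar>g i x - pderiv v i x\<bar> powr q))"
  have pt: "\<bar>\<eta> x * f x - w x\<bar> powr q
              + (\<Sum>i\<in>Basis. \<bar>(\<eta> x * g i x + pderiv \<eta> i x * f x) - pderiv w i x\<bar> powr q) \<le> K * E x"
    if x: "x \<in> \<Omega>" for x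
  proof -
    have dw: "pderiv w i x = pderiv \<eta> i x * v x + \<eta> x * pderiv v i x" for i
      unfolding w_def by (rule pderiv_mult[OF smooth_at[OF \<eta>s] smooth_at[OF vs]])
    have e1: "\<eta> x * f x - w x = \<eta> x * (f x - v x)" unfolding w_def by (simp add: algebra_simps)
    have e2: "(\<eta> x * g i x + pderiv \<eta> i x * f x) - pderiv w i x
        = \<eta> x * (g i x - pderiv v i x) + pderiv \<eta> i x * (f x - v x)" for i
      unfolding dw by (simp add: algebra_simps)
    show ?thesis unfolding e1 e2 K_def E_def
      by (rule pt_bound[OF q0]) (use M1 M2 x in auto)
  qed
  define Fm where "Fm = (\<lambda>x. indicator \<Omega> x *\<^sub>R f x)"
  define Gm where "Gm = (\<lambda>i x. indicator \<Omega> x *\<^sub>R g i x)"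
  have Fmm: "Fm \<in> borel_measurable lebesgue" unfolding Fm_def using Lq_meas[OF Lf] .
  have Gmm: "Gm i \<in> borel_measurable lebesgue" if "i \<in> Basis" for i
    unfolding Gm_def using Lq_meas[OF Lg[OF that]] .
  have vm: "v \<in> borel_measurable lebesgue" using cont_meas[OF smooth_cont[OF vs]] .
  have dvm: "pderiv v i \<in> borel_measurable lebesgue" if "i \<in> Basis" for i
    using cont_meas[OF smooth_cont[OF smooth_diff(2)[OF vs that]]] .
  define Sm where "Sm = (\<lambda>x. \<Sum>i\<in>Basis. \<bar>Gm i x - indicator \<Omega> x * pderiv v i x\<bar> powr q)"
  have Smm: "Sm \<in> borel_measurable lebesgue" unfolding Sm_def
  proof (rule borel_measurable_sum)
    fix i :: 'a assume i: "i \<in> Basis"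
    show "(\<lambda>x. \<bar>Gm i x - indicator \<Omega> x * pderiv v i x\<bar> powr q) \<in> borel_measurable lebesgue"
      using Gmm[OF i] dvm[OF i] Osets by measurable
  qed
  have Eeq: "(\<lambda>x. ennreal (E x) * indicator \<Omega> x) =
      (\<lambda>x. ennreal (\<bar>Fm x - indicator \<Omega> x * v x\<bar> powr q + Sm x) * indicator \<Omega> x)"
  proof (rule ext)
    fix x show "ennreal (E x) * indicator \<Omega> x =
      ennreal (\<bar>Fm x - indicator \<Omega> x * v x\<bar> powr q + Sm x) * indicator \<Omega> x"
      by (cases "x \<in> \<Omega>") (simp_all add: E_def Fm_def Gm_def Sm_def)
  qed
  have Em: "(\<lambda>x. ennreal (E x) * indicator \<Omega> x) \<in> borel_measurable lebesgue"
    unfolding Eeq using Fmm vm Smm Osets by measurable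
  have "(\<integral>\<^sup>+ x\<in>\<Omega>j. ennreal (\<bar>\<eta> x * f x - w x\<bar> powr q
              + (\<Sum>i\<in>Basis. \<bar>(\<eta> x * g i x + pderiv \<eta> i x * f x) - pderiv w i x\<bar> powr q)) \<partial>lebesgue)
     \<le> (\<integral>\<^sup>+ x. ennreal K * (ennreal (E x) * indicator \<Omega> x) \<partial>lebesgue)"
  proof (rule nn_integral_mono)
    fix x
    show "ennreal (\<bar>\<eta> x * f x - w x\<bar> powr q
              + (\<Sum>i\<in>Basis. \<bar>(\<eta> x * g i x + pderiv \<eta> i x * f x) - pderiv w i x\<bar> powr q)) * indicator \<Omega>j x
          \<le> ennreal K * (ennreal (E x) * indicator \<Omega> x)"
    proof (cases "x \<in> \<Omega>j")
      case True
      then have xO: "x \<in> \<Omega>" using jsubO by blast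
      have "ennreal (\<bar>\<eta> x * f x - w x\<bar> powr q
              + (\<Sum>i\<in>Basis. \<bar>(\<eta> x * g i x + pderiv \<eta> i x * f x) - pderiv w i x\<bar> powr q)) \<le> ennreal (K * E x)"
        by (rule ennreal_leI[OF pt[OF xO]])
      then show ?thesis using True xO K0 by (simp add: ennreal_mult')
    qed simp
  qed
  also have "\<dots> = ennreal K * (\<integral>\<^sup>+ x\<in>\<Omega>. ennreal (E x) \<partial>lebesgue)"
    by (rule nn_integral_cmult[OF Em])
  also have "\<dots> < ennreal K * ennreal (\<epsilon> / K)"
    by (rule ennreal_mult_strict_left_mono) (use vI K0 in \<open>auto simp: E_def\<close>)
  also have "\<dots> = ennreal \<epsilon>" using K0 by (simp add: ennreal_mult'[symmetric])
  finally show ?thesis using ws wcpt wfr by blast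
qed



lemma main_gen:
  fixes \<Omega> D U \<Omega>j :: "'a::euclidean_space set" and q :: real and f \<eta> :: "'a \<Rightarrow> real"
  assumes \<Omega>: "open \<Omega>" "bounded \<Omega>"
    and U: "open U" "U \<subseteq> \<Omega> \<union> D"
    and q1: "1 \<le> q"
    and fW: "W1qE q \<Omega> D f"
    and \<eta>C: "\<eta> \<in> Cinf_c U"
    and comp: "\<Omega>j \<in> components (\<Omega> \<inter> U)"
  shows "W1q0 q \<Omega>j (\<lambda>x. \<eta> x * f x)"
proof -
  have q0: "0 < q" using q1 by simp
  have jsub: "\<Omega>j \<subseteq> \<Omega> \<inter> U" using in_components_subset[OF comp] .
  have jopen: "open \<Omega>j" using open_components[OF _ comp] \<Omega>(1) U(1) by blast
  have jbd: "bounded \<Omega>j" using bounded_subset[OF \<Omega>(2)] jsub by blast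
  have jsets: "\<Omega>j \<in> sets lebesgue" using open_bounded_sets[OF jopen jbd] .
  have jsubO: "\<Omega>j \<subseteq> \<Omega>" using jsub by blast
  have Osets: "\<Omega> \<in> sets lebesgue" using open_bounded_sets[OF \<Omega>] .
  have Ofin: "emeasure lebesgue \<Omega> < \<infinity>"
    using fmeasurableD2[OF lmeasurable_open[OF \<Omega>(2,1)]] by (simp add: top.not_eq_extremum)
  obtain g where Wg: "W1q_grad q \<Omega> f g"
    and approx: "\<forall>\<epsilon>>0. \<exists>v. smooth v \<and> compact (csupp v) \<and> csupp v \<inter> D = {} \<and>
         (\<integral>\<^sup>+ x\<in>\<Omega>. ennreal (\<bar>f x - v x\<bar> powr q
              + (\<Sum>i\<in>Basis. \<bar>g i x - pderiv v i x\<bar> powr q)) \<partial>lebesgue) < ennreal \<epsilon>"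
    using fW unfolding W1qE_def by blast
  have Lf: "Lq q \<Omega> f" and wg: "\<And>i. i \<in> Basis \<Longrightarrow> weak_pderiv \<Omega> f i (g i)"
    and Lg: "\<And>i. i \<in> Basis \<Longrightarrow> Lq q \<Omega> (g i)"
    using Wg unfolding W1q_grad_def by auto
  have \<eta>s: "smooth \<eta>" and \<eta>cpt: "compact (csupp \<eta>)" and \<eta>U: "csupp \<eta> \<subseteq> U"
    using \<eta>C unfolding Cinf_c_def by auto
  have \<eta>c: "continuous_on UNIV \<eta>" using smooth_cont[OF \<eta>s] .
  have d\<eta>s: "\<And>i. i \<in> Basis \<Longrightarrow> smooth (pderiv \<eta> i)" using smooth_diff(2)[OF \<eta>s] .
  have d\<eta>c: "\<And>i. i \<in> Basis \<Longrightarrow> continuous_on UNIV (pderiv \<eta> i)" using d\<eta>s smooth_cont by blast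
  obtain M1 where M1: "\<forall>x\<in>\<Omega>. \<bar>\<eta> x\<bar> \<le> M1" using bounded_cont[OF \<eta>c \<Omega>(2)] by blast
  have hc: "continuous_on UNIV (\<lambda>x. \<Sum>i\<in>Basis. \<bar>pderiv \<eta> i x\<bar>)"
    using d\<eta>c by (intro continuous_on_sum continuous_on_rabs) auto
  obtain M2 where M2: "\<forall>x\<in>\<Omega>. \<bar>\<Sum>i\<in>Basis. \<bar>pderiv \<eta> i x\<bar>\<bar> \<le> M2" using bounded_cont[OF hc \<Omega>(2)] by blast
  have M2': "\<bar>pderiv \<eta> i x\<bar> \<le> M2" if "x \<in> \<Omega>" "i \<in> Basis" for x i
  proof -
    have "\<bar>pderiv \<eta> i x\<bar> \<le> (\<Sum>i\<in>Basis. \<bar>pderiv \<eta> i x\<bar>)"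
      using that by (intro member_le_sum) auto
    also have "\<dots> \<le> M2" using M2 that by force
    finally show ?thesis .
  qed
  define G where "G = (\<lambda>i x. \<eta> x * g i x + pderiv \<eta> i x * f x)"
  have If: "set_integrable lebesgue \<Omega> f" using Lq_integrable[OF Lf q1 Osets Ofin] .
  have Ig: "\<And>i. i \<in> Basis \<Longrightarrow> set_integrable lebesgue \<Omega> (g i)"
    using Lq_integrable[OF Lg q1 Osets Ofin] .

  have L1: "Lq q \<Omega>j (\<lambda>x. \<eta> x * f x)"
    by (rule Lq_mult_bounded[OF Lf q0 jsubO jsets cont_meas[OF \<eta>c]]) (use M1 jsubO in blast)
  have L2: "Lq q \<Omega>j (G i)" if i: "i \<in> Basis" for i
  proof -
    have a: "Lq q \<Omega>j (\<lambda>x. \<eta> x * g i x)"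
      by (rule Lq_mult_bounded[OF Lg[OF i] q0 jsubO jsets cont_meas[OF \<eta>c]]) (use M1 jsubO in blast)
    have b: "Lq q \<Omega>j (\<lambda>x. pderiv \<eta> i x * f x)"
      by (rule Lq_mult_bounded[OF Lf q0 jsubO jsets cont_meas[OF d\<eta>c[OF i]]]) (use M2' i jsubO in blast)
    show ?thesis unfolding G_def using Lq_add[OF a b q0] .
  qed

  have WD: "weak_pderiv \<Omega>j (\<lambda>x. \<eta> x * f x) i (G i)" if i: "i \<in> Basis" for i
    unfolding weak_pderiv_def
  proof
    fix \<phi> assume \<phi>C: "\<phi> \<in> Cinf_c \<Omega>j"
    have \<phi>s: "smooth \<phi>" and \<phi>cpt: "compact (csupp \<phi>)" and \<phi>j: "csupp \<phi> \<subseteq> \<Omega>j"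
      using \<phi>C unfolding Cinf_c_def by auto
    define \<psi> where "\<psi> = (\<lambda>x. \<eta> x * \<phi> x)"
    have \<psi>s: "smooth \<psi>" unfolding \<psi>_def using smooth_mult[OF \<eta>s \<phi>s] .
    have \<psi>sub: "csupp \<psi> \<subseteq> csupp \<eta> \<inter> csupp \<phi>" unfolding \<psi>_def by (rule csupp_mult)
    have "compact (csupp \<phi> \<inter> csupp \<psi>)" using compact_Int_closed[OF \<phi>cpt closed_csupp] .
    moreover have "csupp \<phi> \<inter> csupp \<psi> = csupp \<psi>" using \<psi>sub by blast
    ultimately have \<psi>cpt: "compact (csupp \<psi>)" by simp
    have "\<psi> \<in> Cinf_c \<Omega>" unfolding Cinf_c_def using \<psi>s \<psi>cpt \<psi>sub \<phi>j jsubO by blast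
    then have weak: "(LINT x:\<Omega>|lebesgue. f x * pderiv \<psi> i x) = - (LINT x:\<Omega>|lebesgue. g i x * \<psi> x)"
      using wg[OF i] unfolding weak_pderiv_def by blast
    have d\<psi>: "pderiv \<psi> i x = pderiv \<eta> i x * \<phi> x + \<eta> x * pderiv \<phi> i x" for x
      unfolding \<psi>_def by (rule pderiv_mult[OF smooth_at[OF \<eta>s] smooth_at[OF \<phi>s]])
    have \<phi>c: "continuous_on UNIV \<phi>" using smooth_cont[OF \<phi>s] .
    have d\<phi>c: "continuous_on UNIV (pderiv \<phi> i)" using smooth_cont[OF smooth_diff(2)[OF \<phi>s i]] .
    have c1: "continuous_on UNIV (\<lambda>x. pderiv \<eta> i x * \<phi> x)"
      using d\<eta>c[OF i] \<phi>c by (rule continuous_on_mult)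
    have c2: "continuous_on UNIV (\<lambda>x. \<eta> x * pderiv \<phi> i x)"
      using \<eta>c d\<phi>c by (rule continuous_on_mult)
    have c3: "continuous_on UNIV (\<lambda>x. \<eta> x * \<phi> x)"
      using \<eta>c \<phi>c by (rule continuous_on_mult)
    obtain K1 where K1: "\<forall>x\<in>\<Omega>. \<bar>pderiv \<eta> i x * \<phi> x\<bar> \<le> K1" using bounded_cont[OF c1 \<Omega>(2)] by blast
    obtain K2 where K2: "\<forall>x\<in>\<Omega>. \<bar>\<eta> x * pderiv \<phi> i x\<bar> \<le> K2" using bounded_cont[OF c2 \<Omega>(2)] by blast
    obtain K3 where K3: "\<forall>x\<in>\<Omega>. \<bar>\<eta> x * \<phi> x\<bar> \<le> K3" using bounded_cont[OF c3 \<Omega>(2)] by blast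
    have I1: "set_integrable lebesgue \<Omega> (\<lambda>x. f x * (pderiv \<eta> i x * \<phi> x))"
      using set_integrable_mult_bounded[OF If cont_meas[OF c1] K1] .
    have I2: "set_integrable lebesgue \<Omega> (\<lambda>x. f x * (\<eta> x * pderiv \<phi> i x))"
      using set_integrable_mult_bounded[OF If cont_meas[OF c2] K2] .
    have I3: "set_integrable lebesgue \<Omega> (\<lambda>x. g i x * (\<eta> x * \<phi> x))"
      using set_integrable_mult_bounded[OF Ig[OF i] cont_meas[OF c3] K3] .
    have out: "\<phi> x = 0" "pderiv \<phi> i x = 0" if "x \<notin> \<Omega>j" for x
      using that \<phi>j not_csupp[of x \<phi>] pderiv_not_csupp[of x \<phi> i] by auto
    define A1 where "A1 = (LINT x:\<Omega>|lebesgue. f x * (pderiv \<eta> i x * \<phi> x))"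
    define A2 where "A2 = (LINT x:\<Omega>|lebesgue. f x * (\<eta> x * pderiv \<phi> i x))"
    define B where "B = (LINT x:\<Omega>|lebesgue. g i x * (\<eta> x * \<phi> x))"
    have "(LINT x:\<Omega>|lebesgue. f x * pderiv \<psi> i x) =
          (LINT x:\<Omega>|lebesgue. f x * (pderiv \<eta> i x * \<phi> x) + f x * (\<eta> x * pderiv \<phi> i x))"
      by (simp add: d\<psi> distrib_left)
    also have "\<dots> = A1 + A2" unfolding A1_def A2_def using set_integral_add(2)[OF I1 I2] .
    finally have e1: "A1 + A2 = - B" using weak unfolding B_def \<psi>_def by simp
    have lhs: "(LINT x:\<Omega>j|lebesgue. \<eta> x * f x * pderiv \<phi> i x) = A2"
    proof -
      have "(LINT x:\<Omega>j|lebesgue. \<eta> x * f x * pderiv \<phi> i x) = (LINT x:\<Omega>|lebesgue. \<eta> x * f x * pderiv \<phi> i x)"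
        by (rule set_integral_restrict[symmetric]) (use jsubO out in auto)
      also have "\<dots> = A2" unfolding A2_def by (simp add: mult_ac)
      finally show ?thesis .
    qed
    have rhs: "(LINT x:\<Omega>j|lebesgue. G i x * \<phi> x) = B + A1"
    proof -
      have "(LINT x:\<Omega>j|lebesgue. G i x * \<phi> x) = (LINT x:\<Omega>|lebesgue. G i x * \<phi> x)"
        by (rule set_integral_restrict[symmetric]) (use jsubO out in auto)
      also have "\<dots> = (LINT x:\<Omega>|lebesgue. g i x * (\<eta> x * \<phi> x) + f x * (pderiv \<eta> i x * \<phi> x))"
        unfolding G_def by (simp add: algebra_simps)
      also have "\<dots> = B + A1" unfolding A1_def B_def using set_integral_add(2)[OF I3 I1] .
      finally show ?thesis .
    qed
    show "(LINT x:\<Omega>j|lebesgue. \<eta> x * f x * pderiv \<phi> i x) = - (LINT x:\<Omega>j|lebesgue. G i x * \<phi> x)"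
      unfolding lhs rhs using e1 by simp
  qed
  have grad: "W1q_grad q \<Omega>j (\<lambda>x. \<eta> x * f x) G"
    unfolding W1q_grad_def using L1 L2 WD by blast
  have OU: "open (\<Omega> \<inter> U)" using \<Omega>(1) U(1) by (rule open_Int)
  have AP: "\<forall>\<epsilon>>0. \<exists>w. smooth w \<and> compact (csupp w) \<and> csupp w \<inter> frontier \<Omega>j = {} \<and>
         (\<integral>\<^sup>+ x\<in>\<Omega>j. ennreal (\<bar>\<eta> x * f x - w x\<bar> powr q
              + (\<Sum>i\<in>Basis. \<bar>G i x - pderiv w i x\<bar> powr q)) \<partial>lebesgue) < ennreal \<epsilon>"
    unfolding G_def using approx_part[OF jsubO Osets q0 \<eta>s \<eta>cpt \<eta>U U(2) OU comp M1 M2' Lf Lg approx] by blast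
  show ?thesis unfolding W1q0_def W1qE_def using grad AP by blast
qed


theorem corollary3p9:
  fixes \<Omega> D U :: "(real^3) set" and q :: real
    and f \<eta> :: "real^3 \<Rightarrow> real"
  assumes "open \<Omega>" "connected \<Omega>" "bounded \<Omega>"
    and "closed D" "D \<subseteq> frontier \<Omega>"
    and "open U" "U \<subseteq> \<Omega> \<union> D"
    and "finite (components (\<Omega> \<inter> U))"
    and "1 \<le> q"
    and "W1qE q \<Omega> D f"
    and "\<eta> \<in> Cinf_c U"
  shows "\<forall>\<Omega>j \<in> components (\<Omega> \<inter> U). W1q0 q \<Omega>j (\<lambda>x. \<eta> x * f x)"
  using main_gen[OF assms(1,3,6,7,9,10,11)] by blast

end
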